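(* There exists a coefficient vector $\mathbf a=(a_0,a_1,a_2,\dots)\in\mathbb{R}^{\mathbb{N}}$ such that for every graph $G$, if $G$ is geometrically rigid then the linear centrality $f^{\mathbf a}$ has no ties on $G$.
   Context: A graph $G$ is a finite directed graph with node set $V_G=\{0,\dots,n-1\}$ and arc set $E_G\subseteq V_G\times V_G$; $d_G(x,y)$ is the shortest directed path length from $x$ to $y$ ($\infty$ if none). The distance-count matrix $C_G\in\mathbb{R}^{n\times n}$ has entries $(C_G)_{i,k}=|\{j\in V_G: d_G(j,i)=k\}|$ for $i,k\in\{0,\dots,n-1\}$. $G$ is geometrically rigid if the rows of $C_G$ are pairwise distinct. For $\mathbf a\in\mathbb{R}^{\mathbb{N}}$, the linear centrality $f^{\mathbf a}$ is defined by $f^{\mathbf a}_G(i)=\sum_{k=0}^{n-1}(C_G)_{i,k}\,a_k$. A centrality $f$ has no ties on $G$ if $f_G(x)\ne f_G(y)$ for all distinct $x,y\in V_G$. *)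

theory Defs
  imports Main "HOL-Library.Extended_Nat"
begin

definition is_graph :: "nat \<Rightarrow> (nat \<times> nat) set \<Rightarrow> bool" where
  "is_graph n E \<longleftrightarrow> E \<subseteq> {0..<n} \<times> {0..<n}"

text \<open>Shortest directed path length from x to y (infinity if none):
  the least k such that there is a walk of exactly k arcs (shortest walks are paths).\<close>

definition gdist :: "(nat \<times> nat) set \<Rightarrow> nat \<Rightarrow> nat \<Rightarrow> enat" where
  "gdist E x y = (if \<exists>k. (x, y) \<in> E ^^ k then enat (LEAST k. (x, y) \<in> E ^^ k) else \<infinity>)"

definition dcount :: "nat \<Rightarrow> (nat \<times> nat) set \<Rightarrow> nat \<Rightarrow> nat \<Rightarrow> nat" where
  "dcount n E i k = card {j \<in> {0..<n}. gdist E j i = enat k}"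

definition crow :: "nat \<Rightarrow> (nat \<times> nat) set \<Rightarrow> nat \<Rightarrow> nat \<Rightarrow> nat" where
  "crow n E i = (\<lambda>k. if k < n then dcount n E i k else 0)"

definition geom_rigid :: "nat \<Rightarrow> (nat \<times> nat) set \<Rightarrow> bool" where
  "geom_rigid n E \<longleftrightarrow> (\<forall>x\<in>{0..<n}. \<forall>y\<in>{0..<n}. x \<noteq> y \<longrightarrow> crow n E x \<noteq> crow n E y)"

definition lin_centrality :: "(nat \<Rightarrow> real) \<Rightarrow> nat \<Rightarrow> (nat \<times> nat) set \<Rightarrow> nat \<Rightarrow> real" where
  "lin_centrality a n E i = (\<Sum>k<n. real (dcount n E i k) * a k)"

definition no_ties :: "(nat \<Rightarrow> (nat \<times> nat) set \<Rightarrow> nat \<Rightarrow> real) \<Rightarrow> nat \<Rightarrow> (nat \<times> nat) set \<Rightarrow> bool" where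
  "no_ties f n E \<longleftrightarrow> (\<forall>x\<in>{0..<n}. \<forall>y\<in>{0..<n}. x \<noteq> y \<longrightarrow> f n E x \<noteq> f n E y)"

end

theory Submission
  imports Defs "HOL-Computational_Algebra.Polynomial" "HOL-Analysis.Continuum_Not_Denumerable"
begin

lemma poly_Poly_sum:
  "poly (Poly (map real_of_int ds)) t = (\<Sum>k<length ds. real_of_int (ds ! k) * t ^ k)"
proof (induction ds)
  case Nil then show ?case by simp
next
  case (Cons d ds)
  have "(\<Sum>k<length (d # ds). real_of_int ((d # ds) ! k) * t ^ k)
        = real_of_int d + (\<Sum>k<length ds. real_of_int (ds ! k) * t ^ Suc k)"
    by (simp add: sum.lessThan_Suc_shift del: sum.lessThan_Suc)
  also have "\<dots> = real_of_int d + t * (\<Sum>k<length ds. real_of_int (ds ! k) * t ^ k)"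
    by (simp add: sum_distrib_left algebra_simps)
  finally show ?case using Cons by simp
qed

lemma exists_transc:
  "\<exists>t::real. \<forall>ds::int list. (\<exists>x\<in>set ds. x \<noteq> 0) \<longrightarrow>
      (\<Sum>k<length ds. real_of_int (ds ! k) * t ^ k) \<noteq> 0"
proof -
  define B where "B = (\<Union>ds\<in>{ds::int list. \<exists>x\<in>set ds. x \<noteq> 0}.
                        {t::real. poly (Poly (map real_of_int ds)) t = 0})"
  have fin: "finite {t::real. poly (Poly (map real_of_int ds)) t = 0}"
    if "\<exists>x\<in>set ds. x \<noteq> 0" for ds :: "int list"
  proof (rule poly_roots_finite)
    show "Poly (map real_of_int ds) \<noteq> 0"
    proof
      assume "Poly (map real_of_int ds) = 0"
      then obtain m where "map real_of_int ds = replicate m 0"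
        by (auto simp: Poly_eq_0)
      then have "\<forall>x\<in>set ds. x = 0"
        by (metis (mono_tags, lifting) imageI in_set_replicate list.set_map of_int_eq_0_iff)
      with that show False by blast
    qed
  qed
  have "countable B"
    unfolding B_def
    by (rule countable_UN) (auto intro: countable_finite fin)
  then have "B \<noteq> UNIV" using uncountable_UNIV_real by auto
  then obtain t where "t \<notin> B" by blast
  then show ?thesis unfolding B_def by (auto simp: poly_Poly_sum)
qed

theorem theorem3:
  shows "\<exists>a :: nat \<Rightarrow> real. \<forall>n E. is_graph n E \<longrightarrow> geom_rigid n E \<longrightarrow>
           no_ties (lin_centrality a) n E"
proof -
  obtain t :: real where t: "\<And>ds::int list. (\<exists>x\<in>set ds. x \<noteq> 0) \<Longrightarrow>
      (\<Sum>k<length ds. real_of_int (ds ! k) * t ^ k) \<noteq> 0"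
    using exists_transc by blast
  show ?thesis
  proof (intro exI allI impI)
    fix n E assume "is_graph n E" "geom_rigid n E"
    show "no_ties (lin_centrality (\<lambda>k. t ^ k)) n E"
      unfolding no_ties_def
    proof (intro ballI impI)
      fix x y assume xy: "x \<in> {0..<n}" "y \<in> {0..<n}" "x \<noteq> y"
      with \<open>geom_rigid n E\<close> have "crow n E x \<noteq> crow n E y"
        unfolding geom_rigid_def by blast
      then obtain k where k: "k < n" "dcount n E x k \<noteq> dcount n E y k"
        unfolding crow_def by (metis (no_types, lifting) ext)
      define ds where "ds = map (\<lambda>k. int (dcount n E x k) - int (dcount n E y k)) [0..<n]"
      have "\<exists>z\<in>set ds. z \<noteq> 0" using k unfolding ds_def by force
      then have ne: "(\<Sum>k<length ds. real_of_int (ds ! k) * t ^ k) \<noteq> 0" by (rule t)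
      have "(\<Sum>k<length ds. real_of_int (ds ! k) * t ^ k)
            = lin_centrality (\<lambda>k. t ^ k) n E x - lin_centrality (\<lambda>k. t ^ k) n E y"
        unfolding lin_centrality_def ds_def
        by (simp add: sum_subtractf[symmetric] algebra_simps)
      with ne show "lin_centrality (\<lambda>k. t ^ k) n E x \<noteq> lin_centrality (\<lambda>k. t ^ k) n E y"
        by simp
    qed
  qed
qed

end
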